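(* Let $0<c<1$, let $(v^*,u^* )$ be the unique saddle point of $\min_v\max_u E(v,u)$, and let $$L_c(v,u)=\frac{\alpha}{2}\sum_s|v_s-v^*_s|^2+\tau\Big(\sum_{s,a}\Big(u^*_{sa}\log\frac{u^*_{sa}}{u_{sa}}+u_{sa}-u^*_{sa}\Big)+\frac{c}{1-c}\sum_s\Big(\tilde u^*_s\log\frac{\tilde u^*_s}{\tilde u_s}+\tilde u_s-\tilde u^*_s\Big)\Big).$$ Consider the interpolating natural gradient dynamics on $\mathbb{R}^{|S|}\times\mathbb{R}^{|S|\times|A|}_{>0}$: $$\frac{dv_{s'}}{dt}=-\Big(v_{s'}-\frac1\alpha\sum_{s,a}K_{ass'}u_{sa}\Big),\ s'\in S,$$ $$\frac{du_{s\cdot}}{dt}=-\tilde u_s\big(\mathrm{diag}(\pi_{s\cdot})-c\,\pi_{s\cdot}\pi_{s\cdot}^{\mathsf T}\big)\Big(\log\frac{u_{s\cdot}}{\tilde u_s}-\frac1\tau\Big(r_{s\cdot}-\sum_{s'}K_{\cdot ss'}v_{s'}\Big)\Big),\ s\in S,$$ where $\pi_{sa}=u_{sa}/\tilde u_s$. Then $L_c$ is a Lyapunov function for this dynamics: $\frac{dL_c}{dt}\le0$ along trajectories, and the only trajectory along which $\frac{dL_c}{dt}=0$ is the constant trajectory $(v,u)=(v^*,u^* )$.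
   Context: Finite MDP: state space $S$, action space $A$, transition probabilities $P_{ass'}$ (with $\sum_{s'}P_{ass'}=1$), rewards $r_{sa}\ge0$, discount $\gamma\in(0,1)$, regularization $\tau>0$, and $\alpha>0$. $K_{ass'}=\delta_{ss'}-\gamma P_{ass'}$, $\tilde u_s=\sum_a u_{sa}$. For fixed $s$, $u_{s\cdot},\pi_{s\cdot},r_{s\cdot}\in\mathbb{R}^{|A|}$ are the vectors indexed by $a$, $K_{\cdot ss'}\in\mathbb{R}^{|A|}$ has $a$-th entry $K_{ass'}$, logarithms and divisions of vectors are entrywise, and $\mathrm{diag}(x)$ is the diagonal matrix with diagonal $x$. $E(v,u)=\frac{\alpha}{2}\sum_s v_s^2+\sum_{s,a}u_{sa}(r_{sa}-\sum_{s'}K_{ass'}v_{s'})-\tau\sum_{s,a}u_{sa}\log(u_{sa}/\tilde u_s)$; this min-max problem has a unique saddle point $(v^*,u^* )$ with $u^*_{sa}>0$. *)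

theory Defs
  imports "HOL-Analysis.Analysis"
begin

text \<open>States have type 's, actions type 'a (both finite).
  P a s s' is the transition probability P_{ass'}, r s a the reward r_{sa},
  v s the value vector, u s a the occupancy variable u_{sa}.\<close>

definition Kmat :: "real \<Rightarrow> ('a \<Rightarrow> 's \<Rightarrow> 's \<Rightarrow> real) \<Rightarrow> 'a \<Rightarrow> 's \<Rightarrow> 's \<Rightarrow> real" where
  "Kmat \<gamma> P a s s' = (if s = s' then 1 else 0) - \<gamma> * P a s s'"

definition utilde :: "('s \<Rightarrow> 'a::finite \<Rightarrow> real) \<Rightarrow> 's \<Rightarrow> real" where
  "utilde u s = (\<Sum>a\<in>UNIV. u s a)"

definition Efun :: "real \<Rightarrow> real \<Rightarrow> real \<Rightarrow> ('a::finite \<Rightarrow> 's::finite \<Rightarrow> 's \<Rightarrow> real)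
    \<Rightarrow> ('s \<Rightarrow> 'a \<Rightarrow> real) \<Rightarrow> ('s \<Rightarrow> real) \<Rightarrow> ('s \<Rightarrow> 'a \<Rightarrow> real) \<Rightarrow> real" where
  "Efun \<alpha> \<gamma> \<tau> P r v u =
     \<alpha> / 2 * (\<Sum>s\<in>UNIV. (v s)^2)
     + (\<Sum>s\<in>UNIV. \<Sum>a\<in>UNIV. u s a * (r s a - (\<Sum>s'\<in>UNIV. Kmat \<gamma> P a s s' * v s')))
     - \<tau> * (\<Sum>s\<in>UNIV. \<Sum>a\<in>UNIV. u s a * ln (u s a / utilde u s))"

definition is_saddle :: "real \<Rightarrow> real \<Rightarrow> real \<Rightarrow> ('a::finite \<Rightarrow> 's::finite \<Rightarrow> 's \<Rightarrow> real)
    \<Rightarrow> ('s \<Rightarrow> 'a \<Rightarrow> real) \<Rightarrow> ('s \<Rightarrow> real) \<Rightarrow> ('s \<Rightarrow> 'a \<Rightarrow> real) \<Rightarrow> bool" where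
  "is_saddle \<alpha> \<gamma> \<tau> P r vs us \<longleftrightarrow>
     (\<forall>s a. us s a > 0) \<and>
     (\<forall>u. (\<forall>s a. u s a > 0) \<longrightarrow> Efun \<alpha> \<gamma> \<tau> P r vs u \<le> Efun \<alpha> \<gamma> \<tau> P r vs us) \<and>
     (\<forall>v. Efun \<alpha> \<gamma> \<tau> P r vs us \<le> Efun \<alpha> \<gamma> \<tau> P r v us)"

definition Lc :: "real \<Rightarrow> real \<Rightarrow> real \<Rightarrow> ('s::finite \<Rightarrow> real) \<Rightarrow> ('s \<Rightarrow> 'a::finite \<Rightarrow> real)
    \<Rightarrow> ('s \<Rightarrow> real) \<Rightarrow> ('s \<Rightarrow> 'a \<Rightarrow> real) \<Rightarrow> real" where
  "Lc c \<alpha> \<tau> vs us v u =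
     \<alpha> / 2 * (\<Sum>s\<in>UNIV. \<bar>v s - vs s\<bar>^2)
     + \<tau> * ((\<Sum>s\<in>UNIV. \<Sum>a\<in>UNIV. us s a * ln (us s a / u s a) + u s a - us s a)
          + c / (1 - c) * (\<Sum>s\<in>UNIV. utilde us s * ln (utilde us s / utilde u s)
                                       + utilde u s - utilde us s))"

definition vfield :: "real \<Rightarrow> real \<Rightarrow> ('a::finite \<Rightarrow> 's::finite \<Rightarrow> 's \<Rightarrow> real)
    \<Rightarrow> ('s \<Rightarrow> real) \<Rightarrow> ('s \<Rightarrow> 'a \<Rightarrow> real) \<Rightarrow> 's \<Rightarrow> real" where
  "vfield \<alpha> \<gamma> P v u s' = - (v s' - 1 / \<alpha> * (\<Sum>s\<in>UNIV. \<Sum>a\<in>UNIV. Kmat \<gamma> P a s s' * u s a))"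

definition policy :: "('s \<Rightarrow> 'a::finite \<Rightarrow> real) \<Rightarrow> 's \<Rightarrow> 'a \<Rightarrow> real" where
  "policy u s a = u s a / utilde u s"

definition gvec :: "real \<Rightarrow> real \<Rightarrow> ('a::finite \<Rightarrow> 's::finite \<Rightarrow> 's \<Rightarrow> real)
    \<Rightarrow> ('s \<Rightarrow> 'a \<Rightarrow> real) \<Rightarrow> ('s \<Rightarrow> real) \<Rightarrow> ('s \<Rightarrow> 'a \<Rightarrow> real) \<Rightarrow> 's \<Rightarrow> 'a \<Rightarrow> real" where
  "gvec \<gamma> \<tau> P r v u s b =
     ln (u s b / utilde u s) - 1 / \<tau> * (r s b - (\<Sum>s'\<in>UNIV. Kmat \<gamma> P b s s' * v s'))"

definition ufield :: "real \<Rightarrow> real \<Rightarrow> real \<Rightarrow> ('a::finite \<Rightarrow> 's::finite \<Rightarrow> 's \<Rightarrow> real)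
    \<Rightarrow> ('s \<Rightarrow> 'a \<Rightarrow> real) \<Rightarrow> ('s \<Rightarrow> real) \<Rightarrow> ('s \<Rightarrow> 'a \<Rightarrow> real) \<Rightarrow> 's \<Rightarrow> 'a \<Rightarrow> real" where
  "ufield c \<gamma> \<tau> P r v u s a =
     - utilde u s * (\<Sum>b\<in>UNIV.
         ((if a = b then policy u s a else 0) - c * policy u s a * policy u s b)
         * gvec \<gamma> \<tau> P r v u s b)"

end

theory Submission
  imports Defs
begin



lemma stateA:
  fixes u us g :: "'a::finite \<Rightarrow> real" and c :: real
  assumes upos: "\<And>a. u a > 0" and c: "c < 1"
  shows "(\<Sum>a\<in>UNIV. (1 - us a / u a) * (- sum u UNIV * (\<Sum>b\<in>UNIV. ((if a = b then u a / sum u UNIV else 0) - c * (u a / sum u UNIV) * (u b / sum u UNIV)) * g b)))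
    + c / (1 - c) * ((1 - sum us UNIV / sum u UNIV) * (\<Sum>a\<in>UNIV. - sum u UNIV * (\<Sum>b\<in>UNIV. ((if a = b then u a / sum u UNIV else 0) - c * (u a / sum u UNIV) * (u b / sum u UNIV)) * g b)))
    = (\<Sum>a\<in>UNIV. (us a - u a) * g a)"
proof -
  define W where "W = sum u UNIV"
  define Ws where "Ws = sum us UNIV"
  define S where "S = (\<Sum>b\<in>UNIV. u b * g b)"
  have W: "W > 0" unfolding W_def by (rule sum_pos) (auto simp: upos)
  have inner: "- W * (\<Sum>b\<in>UNIV. ((if a = b then u a / W else 0) - c * (u a / W) * (u b / W)) * g b)
      = - (u a * g a) + c * u a * S / W" for a
  proof -
    have "(\<Sum>b\<in>UNIV. ((if a = b then u a / W else 0) - c * (u a / W) * (u b / W)) * g b)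
        = (\<Sum>b\<in>UNIV. (if a = b then u a / W * g b else 0)) - (\<Sum>b\<in>UNIV. c * (u a / W) / W * (u b * g b))"
      unfolding sum_subtractf[symmetric] by (rule sum.cong) (auto simp: algebra_simps)
    also have "\<dots> = u a / W * g a - c * (u a / W) / W * S"
      by (simp add: S_def sum_distrib_left)
    finally show ?thesis using W by (simp add: field_simps)
  qed
  have s1: "(\<Sum>a\<in>UNIV. - (u a * g a) + c * u a * S / W) = - S + c * S"
  proof -
    have "(\<Sum>a\<in>UNIV. - (u a * g a) + c * u a * S / W) = (\<Sum>a\<in>UNIV. - (u a * g a)) + (\<Sum>a\<in>UNIV. (c * S / W) * u a)"
      by (simp add: sum.distrib[symmetric] algebra_simps)
    also have "\<dots> = - S + (c * S / W) * W"
      by (simp only: sum_negf S_def sum_distrib_left[symmetric] W_def[symmetric])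
    finally show ?thesis using W by simp
  qed
  have s2: "(\<Sum>a\<in>UNIV. (1 - us a / u a) * (- (u a * g a) + c * u a * S / W))
      = (\<Sum>a\<in>UNIV. - (u a * g a) + c * u a * S / W) + (\<Sum>a\<in>UNIV. us a * g a) - c * Ws * S / W"
  proof -
    have "(1 - us a / u a) * (- (u a * g a) + c * u a * S / W) = (- (u a * g a) + c * u a * S / W) + us a * g a - (c * S / W) * us a" for a
      using upos[of a] W by (simp add: field_simps)
    then have "(\<Sum>a\<in>UNIV. (1 - us a / u a) * (- (u a * g a) + c * u a * S / W)) = (\<Sum>a\<in>UNIV. (- (u a * g a) + c * u a * S / W) + us a * g a - (c * S / W) * us a)"
      by simp
    also have "\<dots> = (\<Sum>a\<in>UNIV. - (u a * g a) + c * u a * S / W) + (\<Sum>a\<in>UNIV. us a * g a) - (c * S / W) * Ws"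
      by (simp only: sum.distrib sum_subtractf sum_distrib_left[symmetric] Ws_def)
    finally show ?thesis by simp

  qed
  show ?thesis
    unfolding W_def[symmetric] Ws_def[symmetric] inner s2 s1
    using W c by (simp add: field_simps sum_subtractf S_def left_diff_distrib)
qed



lemma gibbs:
  fixes u us :: "'a::finite \<Rightarrow> real"
  assumes upos: "\<And>a. u a > 0" and uspos: "\<And>a. us a > 0"
  shows "0 \<le> (\<Sum>a\<in>UNIV. (u a - us a) * (ln (u a / sum u UNIV) - ln (us a / sum us UNIV)))"
    and "(\<Sum>a\<in>UNIV. (u a - us a) * (ln (u a / sum u UNIV) - ln (us a / sum us UNIV))) = 0
         \<Longrightarrow> u a / sum u UNIV = us a / sum us UNIV"
proof -
  define W where "W = sum u UNIV"
  define Ws where "Ws = sum us UNIV"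
  have W: "W > 0" unfolding W_def by (rule sum_pos) (auto simp: upos)
  have Ws: "Ws > 0" unfolding Ws_def by (rule sum_pos) (auto simp: uspos)
  define p where "p a = u a / W" for a
  define q where "q a = us a / Ws" for a
  have p: "p a > 0" for a using upos W by (simp add: p_def)
  have q: "q a > 0" for a using uspos Ws by (simp add: q_def)
  have sp: "sum p UNIV = 1" using W by (simp add: p_def sum_divide_distrib[symmetric] W_def[symmetric])
  have sq: "sum q UNIV = 1" using Ws by (simp add: q_def sum_divide_distrib[symmetric] Ws_def[symmetric])
  define X where "X a = p a * (ln (p a) - ln (q a)) - (p a - q a)" for a
  define Y where "Y a = - q a * (ln (p a) - ln (q a)) - (q a - p a)" for a
  have X: "X a \<ge> 0" for a
  proof -
    have "ln (q a / p a) \<le> q a / p a - 1" using p q by (intro ln_le_minus_one) auto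
    then have "p a * ln (q a / p a) \<le> p a * (q a / p a - 1)" using p[of a] by (intro mult_left_mono) auto
    also have "\<dots> = q a - p a" using p[of a] by (simp add: field_simps)
    finally show ?thesis using p[of a] q[of a] by (simp add: X_def ln_div algebra_simps)
  qed
  have Y: "Y a \<ge> 0" for a
  proof -
    have "ln (p a / q a) \<le> p a / q a - 1" using p q by (intro ln_le_minus_one) auto
    then have "q a * ln (p a / q a) \<le> q a * (p a / q a - 1)" using q[of a] by (intro mult_left_mono) auto
    also have "\<dots> = p a - q a" using q[of a] by (simp add: field_simps)
    finally show ?thesis using p[of a] q[of a] by (simp add: Y_def ln_div algebra_simps)
  qed
  have spq: "(\<Sum>a\<in>UNIV. p a - q a) = 0" by (simp add: sum_subtractf sp sq)
  have trm: "(u a - us a) * (ln (u a / sum u UNIV) - ln (us a / sum us UNIV))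
      = W * X a + Ws * Y a + (W - Ws) * (p a - q a)" for a
    using W Ws by (simp add: X_def Y_def p_def q_def W_def[symmetric] Ws_def[symmetric] field_simps)
  have tot: "(\<Sum>a\<in>UNIV. (u a - us a) * (ln (u a / sum u UNIV) - ln (us a / sum us UNIV)))
      = W * sum X UNIV + Ws * sum Y UNIV"
    unfolding trm by (simp add: sum.distrib sum_distrib_left[symmetric] spq)
  have sX: "sum X UNIV \<ge> 0" and sY: "sum Y UNIV \<ge> 0" using X Y by (auto intro: sum_nonneg)
  show "0 \<le> (\<Sum>a\<in>UNIV. (u a - us a) * (ln (u a / sum u UNIV) - ln (us a / sum us UNIV)))"
    unfolding tot using W Ws sX sY by simp
  assume "(\<Sum>a\<in>UNIV. (u a - us a) * (ln (u a / sum u UNIV) - ln (us a / sum us UNIV))) = 0"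
  then have "sum Y UNIV = 0" unfolding tot using W Ws sX sY
    by (smt (verit) mult_nonneg_nonneg mult_pos_pos)
  then have "Y a = 0" using Y sum_nonneg_eq_0_iff[of UNIV Y] by auto
  then have "q a * (ln (p a / q a) - (p a / q a - 1)) = 0"
    using p[of a] q[of a] by (simp add: Y_def ln_div field_simps)
  then have "ln (p a / q a) = p a / q a - 1" using q[of a] by simp
  then have "p a / q a = 1" using p[of a] q[of a] by (intro ln_eq_minus_one) auto
  then have "p a = q a" using q[of a] by simp
  then show "u a / sum u UNIV = us a / sum us UNIV" by (simp add: p_def q_def W_def Ws_def)
qed



lemma inv_lemma:
  fixes w :: "'s::finite \<Rightarrow> real" and pi :: "'s \<Rightarrow> 'a::finite \<Rightarrow> real"
    and P :: "'a \<Rightarrow> 's \<Rightarrow> 's \<Rightarrow> real"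
  assumes P_nonneg: "\<And>a s s'. P a s s' \<ge> 0"
    and P_sum: "\<And>a s. (\<Sum>s'\<in>UNIV. P a s s') = 1"
    and g: "0 \<le> \<gamma>" "\<gamma> < 1"
    and pin: "\<And>s a. pi s a \<ge> 0" and pis: "\<And>s. (\<Sum>a\<in>UNIV. pi s a) = 1"
    and eq: "\<And>s'. (\<Sum>s\<in>UNIV. \<Sum>a\<in>UNIV. Kmat \<gamma> P a s s' * (w s * pi s a)) = 0"
  shows "w s0 = 0"
proof -
  define Q where "Q s' = (\<Sum>s\<in>UNIV. \<Sum>a\<in>UNIV. P a s s' * (w s * pi s a))" for s'
  have weq: "w s' = \<gamma> * Q s'" for s'
  proof -
    have "(\<Sum>s\<in>UNIV. \<Sum>a\<in>UNIV. Kmat \<gamma> P a s s' * (w s * pi s a))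
       = (\<Sum>s\<in>UNIV. \<Sum>a\<in>UNIV. (if s = s' then w s * pi s a else 0)) - \<gamma> * Q s'"
    proof -
      have pt: "Kmat \<gamma> P a s s' * (w s * pi s a) = (if s = s' then w s * pi s a else 0) - \<gamma> * (P a s s' * (w s * pi s a))" for a s
        by (simp add: Kmat_def algebra_simps)
      show ?thesis unfolding pt sum_subtractf Q_def sum_distrib_left ..
    qed
    also have "\<dots> = w s' - \<gamma> * Q s'"
    proof -
      have "(\<Sum>s\<in>UNIV. \<Sum>a\<in>UNIV. (if s = s' then w s * pi s a else 0)) = (\<Sum>s\<in>UNIV. if s = s' then w s else 0)"
        by (rule sum.cong) (auto simp: sum_distrib_left[symmetric] pis)
      then show ?thesis by simp
    qed
    finally show ?thesis using eq[of s'] by simp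
  qed
  have "\<bar>w s'\<bar> \<le> \<gamma> * (\<Sum>s\<in>UNIV. \<Sum>a\<in>UNIV. P a s s' * (\<bar>w s\<bar> * pi s a))" for s'
  proof -
    have "\<bar>Q s'\<bar> \<le> (\<Sum>s\<in>UNIV. \<Sum>a\<in>UNIV. \<bar>P a s s' * (w s * pi s a)\<bar>)"
      unfolding Q_def by (rule order.trans[OF sum_abs sum_mono]) (rule sum_abs)
    also have "\<dots> = (\<Sum>s\<in>UNIV. \<Sum>a\<in>UNIV. P a s s' * (\<bar>w s\<bar> * pi s a))"
      using P_nonneg pin by (simp add: abs_mult)
    finally show ?thesis using weq[of s'] g by (simp add: abs_mult mult_left_mono)
  qed
  then have "(\<Sum>s'\<in>UNIV. \<bar>w s'\<bar>) \<le> (\<Sum>s'\<in>UNIV. \<gamma> * (\<Sum>s\<in>UNIV. \<Sum>a\<in>UNIV. P a s s' * (\<bar>w s\<bar> * pi s a)))"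
    by (rule sum_mono)
  also have "\<dots> = \<gamma> * (\<Sum>s\<in>UNIV. \<Sum>a\<in>UNIV. (\<Sum>s'\<in>UNIV. P a s s') * (\<bar>w s\<bar> * pi s a))"
  proof -
    have "(\<Sum>s'\<in>UNIV. \<Sum>s\<in>UNIV. \<Sum>a\<in>UNIV. P a s s' * (\<bar>w s\<bar> * pi s a))
        = (\<Sum>s\<in>UNIV. \<Sum>s'\<in>UNIV. \<Sum>a\<in>UNIV. P a s s' * (\<bar>w s\<bar> * pi s a))"
      by (rule sum.swap)
    also have "\<dots> = (\<Sum>s\<in>UNIV. \<Sum>a\<in>UNIV. \<Sum>s'\<in>UNIV. P a s s' * (\<bar>w s\<bar> * pi s a))"
      by (rule sum.cong[OF refl], rule sum.swap)
    also have "\<dots> = (\<Sum>s\<in>UNIV. \<Sum>a\<in>UNIV. (\<Sum>s'\<in>UNIV. P a s s') * (\<bar>w s\<bar> * pi s a))"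
      by (simp only: sum_distrib_right)
    finally show ?thesis by (simp only: sum_distrib_left[symmetric])
  qed
  also have "\<dots> = \<gamma> * (\<Sum>s\<in>UNIV. \<bar>w s\<bar>)"
    by (simp add: P_sum sum_distrib_left[symmetric] pis)
  finally have "(1 - \<gamma>) * (\<Sum>s\<in>UNIV. \<bar>w s\<bar>) \<le> 0" by (simp add: algebra_simps)
  then have "(\<Sum>s\<in>UNIV. \<bar>w s\<bar>) \<le> 0" using g by (simp add: mult_le_0_iff)
  then have "(\<Sum>s\<in>UNIV. \<bar>w s\<bar>) = 0" by (smt (verit) sum_nonneg abs_ge_zero)
  then show ?thesis using sum_nonneg_eq_0_iff[of UNIV "\<lambda>s. \<bar>w s\<bar>"] by simp
qed



lemma ent_term_deriv:
  fixes x d W D :: real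
  assumes "x > 0" "W > 0"
  shows "((\<lambda>h. (x + h * d) * ln ((x + h * d) / (W + h * D))) has_real_derivative
          (d * ln (x / W) + d - x * D / W)) (at 0)"
  using assms
  by (auto intro!: derivative_eq_intros simp: field_simps)

lemma ent_deriv:
  fixes w d :: "'s::finite \<Rightarrow> 'a::finite \<Rightarrow> real"
  assumes wpos: "\<And>s a. w s a > 0"
  shows "((\<lambda>h. \<Sum>s\<in>UNIV. \<Sum>a\<in>UNIV. (w s a + h * d s a) * ln ((w s a + h * d s a) / (\<Sum>b\<in>UNIV. w s b + h * d s b)))
     has_real_derivative (\<Sum>s\<in>UNIV. \<Sum>a\<in>UNIV. d s a * ln (w s a / (\<Sum>b\<in>UNIV. w s b)))) (at 0)"
proof -
  define W where "W s = (\<Sum>b\<in>UNIV. w s b)" for s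
  define D where "D s = (\<Sum>b\<in>UNIV. d s b)" for s
  have W: "W s > 0" for s unfolding W_def by (rule sum_pos) (auto simp: wpos)
  have eqW: "(\<Sum>b\<in>UNIV. w s b + h * d s b) = W s + h * D s" for s h
    by (simp add: W_def D_def sum.distrib sum_distrib_left)
  have "((\<lambda>h. \<Sum>s\<in>UNIV. \<Sum>a\<in>UNIV. (w s a + h * d s a) * ln ((w s a + h * d s a) / (W s + h * D s)))
     has_real_derivative (\<Sum>s\<in>UNIV. \<Sum>a\<in>UNIV. d s a * ln (w s a / W s) + d s a - w s a * D s / W s)) (at 0)"
    by (intro DERIV_sum ent_term_deriv wpos W)
  moreover have "(\<Sum>a\<in>UNIV. d s a * ln (w s a / W s) + d s a - w s a * D s / W s) = (\<Sum>a\<in>UNIV. d s a * ln (w s a / W s))" for s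
  proof -
    have "(\<Sum>a\<in>UNIV. d s a * ln (w s a / W s) + d s a - w s a * D s / W s)
      = (\<Sum>a\<in>UNIV. d s a * ln (w s a / W s)) + D s - (D s / W s) * W s"
    proof -
      have "\<And>a. d s a * ln (w s a / W s) + d s a - w s a * D s / W s = d s a * ln (w s a / W s) + d s a - (D s / W s) * w s a"
        by simp
      then show ?thesis by (simp only: sum.distrib sum_subtractf sum_distrib_left[symmetric] D_def[symmetric] W_def[symmetric])
    qed
    then show ?thesis using W[of s] by simp
  qed
  ultimately show ?thesis unfolding eqW W_def by simp
qed

lemma foc_u:
  fixes P :: "'a::finite \<Rightarrow> 's::finite \<Rightarrow> 's \<Rightarrow> real"
  assumes saddle: "is_saddle \<alpha> \<gamma> \<tau> P r vs us"
  shows "\<tau> * ln (us s0 b0 / utilde us s0) = r s0 b0 - (\<Sum>s'\<in>UNIV. Kmat \<gamma> P b0 s0 s' * vs s')"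
proof -
  have uspos: "\<And>s a. us s a > 0" and umax: "\<And>u. (\<forall>s a. u s a > 0) \<Longrightarrow> Efun \<alpha> \<gamma> \<tau> P r vs u \<le> Efun \<alpha> \<gamma> \<tau> P r vs us"
    using saddle unfolding is_saddle_def by auto
  define d :: "'s \<Rightarrow> 'a \<Rightarrow> real" where "d s a = (if s = s0 \<and> a = b0 then 1 else 0)" for s a
  define C where "C s a = r s a - (\<Sum>s'\<in>UNIV. Kmat \<gamma> P a s s' * vs s')" for s a
  define f where "f h = Efun \<alpha> \<gamma> \<tau> P r vs (\<lambda>s a. us s a + h * d s a)" for h
  have f_eq: "f = (\<lambda>h. \<alpha> / 2 * (\<Sum>s\<in>UNIV. (vs s)^2) + (\<Sum>s\<in>UNIV. \<Sum>a\<in>UNIV. (us s a + h * d s a) * C s a)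
     - \<tau> * (\<Sum>s\<in>UNIV. \<Sum>a\<in>UNIV. (us s a + h * d s a) * ln ((us s a + h * d s a) / (\<Sum>b\<in>UNIV. us s b + h * d s b))))"
    by (rule ext) (simp add: f_def Efun_def utilde_def C_def)
  have "(f has_real_derivative (0 + (\<Sum>s\<in>UNIV. \<Sum>a\<in>UNIV. d s a * C s a)
      - \<tau> * (\<Sum>s\<in>UNIV. \<Sum>a\<in>UNIV. d s a * ln (us s a / (\<Sum>b\<in>UNIV. us s b))))) (at 0)"
  proof -
    have e1: "((\<lambda>h. \<Sum>s\<in>UNIV. \<Sum>a\<in>UNIV. (us s a + h * d s a) * C s a) has_real_derivative (\<Sum>s\<in>UNIV. \<Sum>a\<in>UNIV. d s a * C s a)) (at 0)"
      by (intro DERIV_sum) (auto intro!: derivative_eq_intros)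
    note e2 = ent_deriv[of us d, OF uspos]
    show ?thesis unfolding f_eq
      by (intro DERIV_diff DERIV_add DERIV_cmult e1 e2 DERIV_const)
  qed
  moreover have "(\<Sum>s\<in>UNIV. \<Sum>a\<in>UNIV. d s a * X s a) = X s0 b0" for X :: "'s \<Rightarrow> 'a \<Rightarrow> real"
  proof -
    have "(\<Sum>s\<in>UNIV. \<Sum>a\<in>UNIV. d s a * X s a) = (\<Sum>s\<in>UNIV. if s = s0 then X s0 b0 else 0)"
      by (rule sum.cong) (auto simp: d_def if_distrib[of "\<lambda>x. x * _"] cong: if_cong)
    then show ?thesis by simp
  qed
  ultimately have der: "(f has_real_derivative (C s0 b0 - \<tau> * ln (us s0 b0 / utilde us s0))) (at 0)"
    by (simp add: utilde_def)
  have "C s0 b0 - \<tau> * ln (us s0 b0 / utilde us s0) = 0"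
  proof (rule DERIV_local_max[OF der])
    show "0 < us s0 b0" by (rule uspos)
    show "\<forall>y. \<bar>0 - y\<bar> < us s0 b0 \<longrightarrow> f y \<le> f 0"
    proof (intro allI impI)
      fix y assume y: "\<bar>0 - y\<bar> < us s0 b0"
      have "\<forall>s a. us s a + y * d s a > 0" using y uspos by (auto simp: d_def)
      then have "f y \<le> Efun \<alpha> \<gamma> \<tau> P r vs us" unfolding f_def by (rule umax)
      moreover have "f 0 = Efun \<alpha> \<gamma> \<tau> P r vs us" by (simp add: f_def)
      ultimately show "f y \<le> f 0" by simp
    qed
  qed
  then show ?thesis by (simp add: C_def)
qed


lemma foc_v:
  fixes P :: "'a::finite \<Rightarrow> 's::finite \<Rightarrow> 's \<Rightarrow> real"
  assumes saddle: "is_saddle \<alpha> \<gamma> \<tau> P r vs us" and alpha: "\<alpha> > 0"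
  shows "\<alpha> * vs s0 = (\<Sum>s\<in>UNIV. \<Sum>a\<in>UNIV. Kmat \<gamma> P a s s0 * us s a)"
proof -
  have vmin: "\<And>v. Efun \<alpha> \<gamma> \<tau> P r vs us \<le> Efun \<alpha> \<gamma> \<tau> P r v us"
    using saddle unfolding is_saddle_def by auto
  define B where "B = (\<Sum>s\<in>UNIV. \<Sum>a\<in>UNIV. Kmat \<gamma> P a s s0 * us s a)"
  define A where "A = \<alpha> * vs s0 - B"
  define h where "h = - A / \<alpha>"
  define v where "v x = vs x + (if x = s0 then h else 0)" for x
  have sq: "(\<Sum>s\<in>UNIV. (v s)^2) = (\<Sum>s\<in>UNIV. (vs s)^2) + (2 * h * vs s0 + h^2)"
  proof -
    have "(v s)^2 = (vs s)^2 + (if s = s0 then 2 * h * vs s0 + h^2 else 0)" for s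
      by (simp add: v_def power2_eq_square algebra_simps)
    then show ?thesis by (simp add: sum.distrib)
  qed
  have kv: "(\<Sum>s'\<in>UNIV. Kmat \<gamma> P a s s' * v s') = (\<Sum>s'\<in>UNIV. Kmat \<gamma> P a s s' * vs s') + h * Kmat \<gamma> P a s s0" for a s
  proof -
    have "Kmat \<gamma> P a s s' * v s' = Kmat \<gamma> P a s s' * vs s' + (if s' = s0 then h * Kmat \<gamma> P a s s0 else 0)" for s'
      by (simp add: v_def algebra_simps)
    then show ?thesis by (simp add: sum.distrib)
  qed
  have lin: "(\<Sum>s\<in>UNIV. \<Sum>a\<in>UNIV. us s a * (r s a - (\<Sum>s'\<in>UNIV. Kmat \<gamma> P a s s' * v s')))
     = (\<Sum>s\<in>UNIV. \<Sum>a\<in>UNIV. us s a * (r s a - (\<Sum>s'\<in>UNIV. Kmat \<gamma> P a s s' * vs s'))) - h * B"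
  proof -
    have "us s a * (r s a - (\<Sum>s'\<in>UNIV. Kmat \<gamma> P a s s' * v s')) = us s a * (r s a - (\<Sum>s'\<in>UNIV. Kmat \<gamma> P a s s' * vs s')) - h * (Kmat \<gamma> P a s s0 * us s a)" for s a
      unfolding kv by (simp add: algebra_simps)
    then show ?thesis by (simp add: sum_subtractf B_def sum_distrib_left)
  qed
  have "Efun \<alpha> \<gamma> \<tau> P r v us = Efun \<alpha> \<gamma> \<tau> P r vs us + (\<alpha> / 2 * (2 * h * vs s0 + h^2) - h * B)"
    unfolding Efun_def sq lin by (simp add: algebra_simps)
  with vmin[of v] have "0 \<le> \<alpha> / 2 * (2 * h * vs s0 + h^2) - h * B" by simp
  also have "\<alpha> / 2 * (2 * h * vs s0 + h^2) - h * B = - (A^2) / (2 * \<alpha>)"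
    using alpha by (simp add: h_def A_def field_simps power2_eq_square)
  finally have "A^2 \<le> 0" using alpha by (simp add: divide_le_0_iff)
  then have "A = 0" by simp
  then show ?thesis by (simp add: A_def B_def)
qed



lemma kl_deriv:
  fixes x :: "real \<Rightarrow> real"
  assumes "A > 0" "x t > 0" "(x has_real_derivative x') (at t)"
  shows "((\<lambda>t. A * ln (A / x t) + x t - A) has_real_derivative ((1 - A / x t) * x')) (at t)"
  using assms by (auto intro!: derivative_eq_intros simp: field_simps)

lemma Lc_deriv:
  fixes v :: "real \<Rightarrow> 's::finite \<Rightarrow> real" and u :: "real \<Rightarrow> 's \<Rightarrow> 'a::finite \<Rightarrow> real"
  assumes upos: "\<And>s a. u t s a > 0" and uspos: "\<And>s a. us s a > 0"
    and vd: "\<And>s. ((\<lambda>t. v t s) has_real_derivative v' s) (at t)"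
    and ud: "\<And>s a. ((\<lambda>t. u t s a) has_real_derivative u' s a) (at t)"
  shows "((\<lambda>t. Lc c \<alpha> \<tau> vs us (v t) (u t)) has_real_derivative
     (\<alpha> * (\<Sum>s\<in>UNIV. (v t s - vs s) * v' s) + \<tau> * ((\<Sum>s\<in>UNIV. \<Sum>a\<in>UNIV. (1 - us s a / u t s a) * u' s a)
        + c / (1 - c) * (\<Sum>s\<in>UNIV. (1 - utilde us s / utilde (u t) s) * (\<Sum>a\<in>UNIV. u' s a))))) (at t)"
proof -
  have Up: "utilde (u t) s > 0" for s unfolding utilde_def by (rule sum_pos) (auto simp: upos)
  have Usp: "utilde us s > 0" for s unfolding utilde_def by (rule sum_pos) (auto simp: uspos)
  have Ud: "((\<lambda>t. utilde (u t) s) has_real_derivative (\<Sum>a\<in>UNIV. u' s a)) (at t)" for s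
    unfolding utilde_def by (intro DERIV_sum ud)
  have d1: "((\<lambda>t. \<Sum>s\<in>UNIV. \<bar>v t s - vs s\<bar>^2) has_real_derivative (\<Sum>s\<in>UNIV. 2 * (v t s - vs s) * v' s)) (at t)"
    unfolding power2_abs
    by (intro DERIV_sum) (auto intro!: derivative_eq_intros vd)
  have d2: "((\<lambda>t. \<Sum>s\<in>UNIV. \<Sum>a\<in>UNIV. us s a * ln (us s a / u t s a) + u t s a - us s a)
     has_real_derivative (\<Sum>s\<in>UNIV. \<Sum>a\<in>UNIV. (1 - us s a / u t s a) * u' s a)) (at t)"
    by (intro DERIV_sum kl_deriv uspos upos ud)
  have d3: "((\<lambda>t. \<Sum>s\<in>UNIV. utilde us s * ln (utilde us s / utilde (u t) s) + utilde (u t) s - utilde us s)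
     has_real_derivative (\<Sum>s\<in>UNIV. (1 - utilde us s / utilde (u t) s) * (\<Sum>a\<in>UNIV. u' s a))) (at t)"
    by (intro DERIV_sum kl_deriv Usp Up Ud)
  have der: "((\<lambda>t. Lc c \<alpha> \<tau> vs us (v t) (u t)) has_real_derivative
     (\<alpha> / 2 * (\<Sum>s\<in>UNIV. 2 * (v t s - vs s) * v' s) + \<tau> * ((\<Sum>s\<in>UNIV. \<Sum>a\<in>UNIV. (1 - us s a / u t s a) * u' s a)
        + c / (1 - c) * (\<Sum>s\<in>UNIV. (1 - utilde us s / utilde (u t) s) * (\<Sum>a\<in>UNIV. u' s a))))) (at t)"
    unfolding Lc_def by (intro DERIV_add DERIV_cmult d1 d2 d3)
  have eq: "\<alpha> / 2 * (\<Sum>s\<in>UNIV. 2 * (v t s - vs s) * v' s) = \<alpha> * (\<Sum>s\<in>UNIV. (v t s - vs s) * v' s)"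
    by (simp add: sum_distrib_left) (rule sum.cong, auto simp: field_simps)
  from der show ?thesis unfolding eq .
qed



lemma cross_swap:
  fixes K :: "'a::finite \<Rightarrow> 's::finite \<Rightarrow> 's \<Rightarrow> real"
  shows "(\<Sum>s'\<in>UNIV. x s' * (\<Sum>s\<in>UNIV. \<Sum>a\<in>UNIV. K a s s' * y s a))
       = (\<Sum>s\<in>UNIV. \<Sum>a\<in>UNIV. y s a * (\<Sum>s'\<in>UNIV. K a s s' * x s'))"
proof -
  have "(\<Sum>s'\<in>UNIV. x s' * (\<Sum>s\<in>UNIV. \<Sum>a\<in>UNIV. K a s s' * y s a))
      = (\<Sum>s'\<in>UNIV. \<Sum>s\<in>UNIV. \<Sum>a\<in>UNIV. K a s s' * x s' * y s a)"
    by (simp add: sum_distrib_left algebra_simps)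
  also have "\<dots> = (\<Sum>s\<in>UNIV. \<Sum>s'\<in>UNIV. \<Sum>a\<in>UNIV. K a s s' * x s' * y s a)"
    by (rule sum.swap)
  also have "\<dots> = (\<Sum>s\<in>UNIV. \<Sum>a\<in>UNIV. \<Sum>s'\<in>UNIV. K a s s' * x s' * y s a)"
    by (rule sum.cong[OF refl], rule sum.swap)
  also have "\<dots> = (\<Sum>s\<in>UNIV. \<Sum>a\<in>UNIV. y s a * (\<Sum>s'\<in>UNIV. K a s s' * x s'))"
    by (simp add: sum_distrib_left algebra_simps)
  finally show ?thesis .
qed

lemma alg:
  fixes P :: "'a::finite \<Rightarrow> 's::finite \<Rightarrow> 's \<Rightarrow> real"
    and V vs :: "'s \<Rightarrow> real" and U us :: "'s \<Rightarrow> 'a \<Rightarrow> real"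
  assumes Upos: "\<And>s a. U s a > 0" and uspos: "\<And>s a. us s a > 0"
    and c: "c < 1" and tau: "\<tau> > 0" and alpha: "\<alpha> > 0"
    and fv: "\<And>s'. \<alpha> * vs s' = (\<Sum>s\<in>UNIV. \<Sum>a\<in>UNIV. Kmat \<gamma> P a s s' * us s a)"
    and fu: "\<And>s b. \<tau> * ln (us s b / utilde us s) = r s b - (\<Sum>s'\<in>UNIV. Kmat \<gamma> P b s s' * vs s')"
  shows "\<alpha> * (\<Sum>s\<in>UNIV. (V s - vs s) * vfield \<alpha> \<gamma> P V U s)
     + \<tau> * ((\<Sum>s\<in>UNIV. \<Sum>a\<in>UNIV. (1 - us s a / U s a) * ufield c \<gamma> \<tau> P r V U s a)
        + c / (1 - c) * (\<Sum>s\<in>UNIV. (1 - utilde us s / utilde U s) * (\<Sum>a\<in>UNIV. ufield c \<gamma> \<tau> P r V U s a)))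
   = - \<alpha> * (\<Sum>s\<in>UNIV. (V s - vs s)^2)
     - \<tau> * (\<Sum>s\<in>UNIV. \<Sum>a\<in>UNIV. (U s a - us s a) * (ln (U s a / utilde U s) - ln (us s a / utilde us s)))"
proof -
  define g where "g s a = gvec \<gamma> \<tau> P r V U s a" for s a
  define KD where "KD s a = (\<Sum>s'\<in>UNIV. Kmat \<gamma> P a s s' * (V s' - vs s'))" for s a
  define LD where "LD s a = ln (U s a / utilde U s) - ln (us s a / utilde us s)" for s a
  have step1: "(\<Sum>s\<in>UNIV. \<Sum>a\<in>UNIV. (1 - us s a / U s a) * ufield c \<gamma> \<tau> P r V U s a)
        + c / (1 - c) * (\<Sum>s\<in>UNIV. (1 - utilde us s / utilde U s) * (\<Sum>a\<in>UNIV. ufield c \<gamma> \<tau> P r V U s a))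
      = (\<Sum>s\<in>UNIV. \<Sum>a\<in>UNIV. (us s a - U s a) * g s a)"
  proof -
    have "(\<Sum>a\<in>UNIV. (1 - us s a / U s a) * ufield c \<gamma> \<tau> P r V U s a)
        + c / (1 - c) * ((1 - utilde us s / utilde U s) * (\<Sum>a\<in>UNIV. ufield c \<gamma> \<tau> P r V U s a))
       = (\<Sum>a\<in>UNIV. (us s a - U s a) * g s a)" for s
      unfolding ufield_def policy_def utilde_def g_def
      by (rule stateA[OF Upos c])
    then show ?thesis
      by (simp add: sum.distrib[symmetric] sum_distrib_left)
  qed
  have gform: "g s a = LD s a + KD s a / \<tau>" for s a
  proof -
    have "KD s a = (\<Sum>s'\<in>UNIV. Kmat \<gamma> P a s s' * V s') - (\<Sum>s'\<in>UNIV. Kmat \<gamma> P a s s' * vs s')"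
      by (simp add: KD_def sum_subtractf[symmetric] algebra_simps)
    then show ?thesis using fu[of s a] tau
      by (simp add: g_def gvec_def LD_def field_simps policy_def)
  qed
  have step2: "\<tau> * (\<Sum>s\<in>UNIV. \<Sum>a\<in>UNIV. (us s a - U s a) * g s a)
     = - \<tau> * (\<Sum>s\<in>UNIV. \<Sum>a\<in>UNIV. (U s a - us s a) * LD s a) + (\<Sum>s\<in>UNIV. \<Sum>a\<in>UNIV. (us s a - U s a) * KD s a)"
  proof -
    have pt: "\<tau> * ((us s a - U s a) * g s a) = - \<tau> * ((U s a - us s a) * LD s a) + (us s a - U s a) * KD s a" for s a
      using tau by (simp add: gform field_simps)
    have "\<tau> * (\<Sum>s\<in>UNIV. \<Sum>a\<in>UNIV. (us s a - U s a) * g s a) = (\<Sum>s\<in>UNIV. \<Sum>a\<in>UNIV. - \<tau> * ((U s a - us s a) * LD s a) + (us s a - U s a) * KD s a)"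
      by (simp only: sum_distrib_left pt)
    also have "\<dots> = - \<tau> * (\<Sum>s\<in>UNIV. \<Sum>a\<in>UNIV. (U s a - us s a) * LD s a) + (\<Sum>s\<in>UNIV. \<Sum>a\<in>UNIV. (us s a - U s a) * KD s a)"
      by (simp only: sum.distrib sum_distrib_left)
    finally show ?thesis .
  qed
  have step3: "\<alpha> * (\<Sum>s\<in>UNIV. (V s - vs s) * vfield \<alpha> \<gamma> P V U s)
      = - \<alpha> * (\<Sum>s\<in>UNIV. (V s - vs s)^2) + (\<Sum>s'\<in>UNIV. (V s' - vs s') * (\<Sum>s\<in>UNIV. \<Sum>a\<in>UNIV. Kmat \<gamma> P a s s' * (U s a - us s a)))"
  proof -
    define T where "T s' = (\<Sum>s\<in>UNIV. \<Sum>a\<in>UNIV. Kmat \<gamma> P a s s' * U s a)" for s'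
    have h: "(\<Sum>s\<in>UNIV. \<Sum>a\<in>UNIV. Kmat \<gamma> P a s s' * (U s a - us s a))
        = T s' - \<alpha> * vs s'" for s'
      unfolding fv T_def by (simp add: sum_subtractf[symmetric] algebra_simps)
    have pt: "\<alpha> * ((V s - vs s) * vfield \<alpha> \<gamma> P V U s) = - \<alpha> * (V s - vs s)^2 + (V s - vs s) * (\<Sum>s'\<in>UNIV. \<Sum>a\<in>UNIV. Kmat \<gamma> P a s' s * (U s' a - us s' a))" for s
      unfolding h vfield_def T_def[symmetric]
      using alpha by (simp add: field_simps power2_eq_square)
    show ?thesis by (simp only: sum_distrib_left pt sum.distrib)
  qed
  have cross: "(\<Sum>s'\<in>UNIV. (V s' - vs s') * (\<Sum>s\<in>UNIV. \<Sum>a\<in>UNIV. Kmat \<gamma> P a s s' * (U s a - us s a)))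
     = (\<Sum>s\<in>UNIV. \<Sum>a\<in>UNIV. (U s a - us s a) * KD s a)"
    unfolding KD_def by (rule cross_swap)
  have neg: "(\<Sum>s\<in>UNIV. \<Sum>a\<in>UNIV. (us s a - U s a) * KD s a) = - (\<Sum>s\<in>UNIV. \<Sum>a\<in>UNIV. (U s a - us s a) * KD s a)"
    by (simp add: sum_negf[symmetric] algebra_simps)
  show ?thesis
    unfolding step1 step2 step3 cross neg LD_def[symmetric] by simp
qed



theorem lemma3p2:
  fixes P :: "'a::finite \<Rightarrow> 's::finite \<Rightarrow> 's \<Rightarrow> real"
    and r :: "'s \<Rightarrow> 'a \<Rightarrow> real"
    and \<gamma> \<tau> \<alpha> c :: real
    and vs :: "'s \<Rightarrow> real" and us :: "'s \<Rightarrow> 'a \<Rightarrow> real"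
    and v :: "real \<Rightarrow> 's \<Rightarrow> real" and u :: "real \<Rightarrow> 's \<Rightarrow> 'a \<Rightarrow> real"
    and I :: "real set"
  assumes P_nonneg: "\<And>a s s'. P a s s' \<ge> 0"
    and P_sum: "\<And>a s. (\<Sum>s'\<in>UNIV. P a s s') = 1"
    and r_nonneg: "\<And>s a. r s a \<ge> 0"
    and gamma: "0 < \<gamma>" "\<gamma> < 1"
    and tau: "\<tau> > 0"
    and alpha: "\<alpha> > 0"
    and c: "0 < c" "c < 1"
    and saddle: "is_saddle \<alpha> \<gamma> \<tau> P r vs us"
    and unique: "\<And>v' u'. is_saddle \<alpha> \<gamma> \<tau> P r v' u' \<Longrightarrow> v' = vs \<and> u' = us"
    and I: "open I" "is_interval I" "I \<noteq> {}"
    and u_pos: "\<And>t s a. t \<in> I \<Longrightarrow> u t s a > 0"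
    and v_ode: "\<And>t s'. t \<in> I \<Longrightarrow>
        ((\<lambda>t. v t s') has_real_derivative vfield \<alpha> \<gamma> P (v t) (u t) s') (at t)"
    and u_ode: "\<And>t s a. t \<in> I \<Longrightarrow>
        ((\<lambda>t. u t s a) has_real_derivative ufield c \<gamma> \<tau> P r (v t) (u t) s a) (at t)"
  shows "(\<forall>t\<in>I. \<exists>D. ((\<lambda>t. Lc c \<alpha> \<tau> vs us (v t) (u t)) has_real_derivative D) (at t) \<and> D \<le> 0)
       \<and> ((\<forall>t\<in>I. ((\<lambda>t. Lc c \<alpha> \<tau> vs us (v t) (u t)) has_real_derivative 0) (at t))
           \<longrightarrow> (\<forall>t\<in>I. v t = vs \<and> u t = us))"
proof -
  have uspos: "\<And>s a. us s a > 0" using saddle unfolding is_saddle_def by auto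
  note fv = foc_v[OF saddle alpha]
  note fu = foc_u[OF saddle]
  define LD where "LD t s a = (u t s a - us s a) * (ln (u t s a / utilde (u t) s) - ln (us s a / utilde us s))" for t s a
  define DD where "DD t = - \<alpha> * (\<Sum>s\<in>UNIV. (v t s - vs s)^2) - \<tau> * (\<Sum>s\<in>UNIV. \<Sum>a\<in>UNIV. LD t s a)" for t
  have der: "((\<lambda>t. Lc c \<alpha> \<tau> vs us (v t) (u t)) has_real_derivative DD t) (at t)" if t: "t \<in> I" for t
  proof -
    have "((\<lambda>t. Lc c \<alpha> \<tau> vs us (v t) (u t)) has_real_derivative
     (\<alpha> * (\<Sum>s\<in>UNIV. (v t s - vs s) * vfield \<alpha> \<gamma> P (v t) (u t) s) + \<tau> * ((\<Sum>s\<in>UNIV. \<Sum>a\<in>UNIV. (1 - us s a / u t s a) * ufield c \<gamma> \<tau> P r (v t) (u t) s a)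
        + c / (1 - c) * (\<Sum>s\<in>UNIV. (1 - utilde us s / utilde (u t) s) * (\<Sum>a\<in>UNIV. ufield c \<gamma> \<tau> P r (v t) (u t) s a))))) (at t)"
      by (rule Lc_deriv[OF u_pos[OF t] uspos v_ode[OF t] u_ode[OF t]])
    also have "(\<alpha> * (\<Sum>s\<in>UNIV. (v t s - vs s) * vfield \<alpha> \<gamma> P (v t) (u t) s) + \<tau> * ((\<Sum>s\<in>UNIV. \<Sum>a\<in>UNIV. (1 - us s a / u t s a) * ufield c \<gamma> \<tau> P r (v t) (u t) s a)
        + c / (1 - c) * (\<Sum>s\<in>UNIV. (1 - utilde us s / utilde (u t) s) * (\<Sum>a\<in>UNIV. ufield c \<gamma> \<tau> P r (v t) (u t) s a)))) = DD t"
      unfolding DD_def LD_def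
      by (rule alg[OF u_pos[OF t] uspos c(2) tau alpha fv fu])
    finally show ?thesis .
  qed
  have LDs: "0 \<le> (\<Sum>a\<in>UNIV. LD t s a)" if t: "t \<in> I" for t s
    unfolding LD_def utilde_def by (rule gibbs(1)) (auto intro: u_pos[OF t] uspos)
  have sq: "0 \<le> (\<Sum>s\<in>UNIV. (v t s - vs s)^2)" for t by (rule sum_nonneg) auto
  have LDss: "0 \<le> (\<Sum>s\<in>UNIV. \<Sum>a\<in>UNIV. LD t s a)" if "t \<in> I" for t
    by (rule sum_nonneg) (rule LDs[OF that])
  have part1: "\<forall>t\<in>I. \<exists>D. ((\<lambda>t. Lc c \<alpha> \<tau> vs us (v t) (u t)) has_real_derivative D) (at t) \<and> D \<le> 0"
  proof
    fix t assume t: "t \<in> I"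
    have "0 \<le> \<alpha> * (\<Sum>s\<in>UNIV. (v t s - vs s)^2)" using sq[of t] alpha by simp
    moreover have "0 \<le> \<tau> * (\<Sum>s\<in>UNIV. \<Sum>a\<in>UNIV. LD t s a)" using LDss[OF t] tau by simp
    ultimately have "DD t \<le> 0" unfolding DD_def by linarith
    then show "\<exists>D. ((\<lambda>t. Lc c \<alpha> \<tau> vs us (v t) (u t)) has_real_derivative D) (at t) \<and> D \<le> 0"
      using der[OF t] by blast
  qed
  have part2: "\<forall>t\<in>I. v t = vs \<and> u t = us"
    if z: "\<forall>t\<in>I. ((\<lambda>t. Lc c \<alpha> \<tau> vs us (v t) (u t)) has_real_derivative 0) (at t)"
  proof -
    have D0: "DD t = 0" if t: "t \<in> I" for t
      using DERIV_unique[OF der[OF t] z[rule_format, OF t]] .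
    have both: "(\<Sum>s\<in>UNIV. (v t s - vs s)^2) = 0 \<and> (\<Sum>s\<in>UNIV. \<Sum>a\<in>UNIV. LD t s a) = 0" if t: "t \<in> I" for t
    proof -
      have "\<alpha> * (\<Sum>s\<in>UNIV. (v t s - vs s)^2) + \<tau> * (\<Sum>s\<in>UNIV. \<Sum>a\<in>UNIV. LD t s a) = 0"
        using D0[OF t] unfolding DD_def by simp
      moreover have "\<alpha> * (\<Sum>s\<in>UNIV. (v t s - vs s)^2) \<ge> 0" "\<tau> * (\<Sum>s\<in>UNIV. \<Sum>a\<in>UNIV. LD t s a) \<ge> 0"
        using sq[of t] LDss[OF t] alpha tau by auto
      ultimately have "\<alpha> * (\<Sum>s\<in>UNIV. (v t s - vs s)^2) = 0 \<and> \<tau> * (\<Sum>s\<in>UNIV. \<Sum>a\<in>UNIV. LD t s a) = 0"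
        by linarith
      then show ?thesis using alpha tau by simp
    qed
    have vv: "v t = vs" if t: "t \<in> I" for t
    proof
      fix s
      have "(v t s - vs s)^2 = 0"
        using both[OF t] sum_nonneg_eq_0_iff[of UNIV "\<lambda>s. (v t s - vs s)^2"] by auto
      then show "v t s = vs s" by simp
    qed
    have pol: "u t s a / utilde (u t) s = us s a / utilde us s" if t: "t \<in> I" for t s a
    proof -
      have "(\<Sum>a\<in>UNIV. LD t s a) = 0"
        using both[OF t] sum_nonneg_eq_0_iff[of UNIV "\<lambda>s. \<Sum>a\<in>UNIV. LD t s a"] LDs[OF t] by auto
      then show ?thesis unfolding LD_def utilde_def
        by (intro gibbs(2)) (auto intro: u_pos[OF t] uspos)
    qed
    show ?thesis
    proof (intro ballI conjI)
      fix t assume t: "t \<in> I"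
      show "v t = vs" by (rule vv[OF t])
      have vf0: "vfield \<alpha> \<gamma> P (v t) (u t) s' = 0" for s'
      proof -
        have "((\<lambda>t. v t s') has_real_derivative 0) (at t)"
          by (rule has_field_derivative_transform_within_open[OF DERIV_const[of "vs s'"] I(1) t])
             (simp add: vv)
        then show ?thesis using DERIV_unique[OF v_ode[OF t]] by blast
      qed
      define w where "w s = utilde (u t) s - utilde us s" for s
      define pi where "pi s a = us s a / utilde us s" for s a
      have Usp: "utilde us s > 0" for s unfolding utilde_def by (rule sum_pos) (auto simp: uspos)
      have Up: "utilde (u t) s > 0" for s unfolding utilde_def by (rule sum_pos) (auto simp: u_pos[OF t])
      have ueq: "u t s a = utilde (u t) s * pi s a" for s a
        using pol[OF t, of s a] Up[of s] by (simp add: pi_def field_simps)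
      have useq: "us s a = utilde us s * pi s a" for s a
        using Usp[of s] by (simp add: pi_def)
      have diff: "u t s a - us s a = w s * pi s a" for s a
        by (simp add: ueq useq w_def algebra_simps)
      have eq: "(\<Sum>s\<in>UNIV. \<Sum>a\<in>UNIV. Kmat \<gamma> P a s s' * (w s * pi s a)) = 0" for s'
      proof -
        have "\<alpha> * vs s' = (\<Sum>s\<in>UNIV. \<Sum>a\<in>UNIV. Kmat \<gamma> P a s s' * u t s a)"
          using vf0[of s'] vv[OF t] alpha by (simp add: vfield_def field_simps)
        then have "(\<Sum>s\<in>UNIV. \<Sum>a\<in>UNIV. Kmat \<gamma> P a s s' * u t s a) - (\<Sum>s\<in>UNIV. \<Sum>a\<in>UNIV. Kmat \<gamma> P a s s' * us s a) = 0"
          using fv[of s'] by simp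
        then show ?thesis
          by (simp add: diff[symmetric] sum_subtractf[symmetric] right_diff_distrib)
      qed
      have pin: "pi s a \<ge> 0" for s a using uspos[of s a] Usp[of s] by (simp add: pi_def)
      have pis: "(\<Sum>a\<in>UNIV. pi s a) = 1" for s
        using Usp[of s] by (simp add: pi_def sum_divide_distrib[symmetric] utilde_def)
      have w0: "w s = 0" for s
        by (rule inv_lemma[OF P_nonneg P_sum _ gamma(2) pin pis eq]) (use gamma in simp)
      show "u t = us"
      proof (intro ext)
        fix s a show "u t s a = us s a" using diff[of s a] w0[of s] by simp
      qed
    qed
  qed
  show ?thesis using part1 part2 by blast
qed

end
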